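(* Let $P,Q\in C^{\infty}(\mathbb{R}^{2})$ be real-valued, and consider the planar vector field $x'=P(x,y),\ y'=Q(x,y)$ together with the first-order differential operator $D$ on $C^{\infty}(\mathbb{R}^{2})$ (complex-valued smooth functions) given by $D(U)=PU_{x}+QU_{y}$. Let $A$ be a self-adjoint subalgebra of $C^{\infty}(\mathbb{R}^{2})$ which separates compact submanifolds of $\mathbb{R}^{2}$, and assume $D(A)\subseteq A$. Then the number of closed orbits (periodic solutions) of the vector field is less than or equal to the codimension of the range $D(A)$ in $A$, i.e. $\dim_{\mathbb{C}} A/D(A)$.
   Context: A subalgebra $A\subseteq C^{\infty}(\mathbb{R}^{2})$ is self-adjoint if it is closed under complex conjugation. $A$ separates compact submanifolds of $\mathbb{R}^{2}$ if for every finite collection of pairwise disjoint smooth closed curves $\gamma_{1},\ldots,\gamma_{n}$ in $\mathbb{R}^{2}$ there exists a real-valued $f\in A$ such that $f(x_{i})\neq f(x_{j})$ for all $x_{i}\in\gamma_{i}$, $x_{j}\in\gamma_{j}$ with $i\neq j$. *)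

theory Defs
  imports "HOL-Analysis.Analysis"
begin

coinductive Cinf :: "('a::euclidean_space \<Rightarrow> 'b::real_normed_vector) \<Rightarrow> bool" where
  "(\<And>x. f differentiable (at x)) \<Longrightarrow> (\<And>v. Cinf (\<lambda>x. frechet_derivative f (at x) v))
     \<Longrightarrow> Cinf f"

definition partial_x :: "(real \<times> real \<Rightarrow> 'b::real_normed_vector) \<Rightarrow> real \<times> real \<Rightarrow> 'b" where
  "partial_x U z = frechet_derivative U (at z) (1, 0)"

definition partial_y :: "(real \<times> real \<Rightarrow> 'b::real_normed_vector) \<Rightarrow> real \<times> real \<Rightarrow> 'b" where
  "partial_y U z = frechet_derivative U (at z) (0, 1)"

definition Dop :: "(real \<times> real \<Rightarrow> real) \<Rightarrow> (real \<times> real \<Rightarrow> real)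
                    \<Rightarrow> (real \<times> real \<Rightarrow> complex) \<Rightarrow> real \<times> real \<Rightarrow> complex" where
  "Dop P Q U = (\<lambda>z. complex_of_real (P z) * partial_x U z + complex_of_real (Q z) * partial_y U z)"

definition subalgebra :: "(real \<times> real \<Rightarrow> complex) set \<Rightarrow> bool" where
  "subalgebra A \<longleftrightarrow> A \<subseteq> {U. Cinf U} \<and> (\<lambda>_. 0) \<in> A \<and>
     (\<forall>U\<in>A. \<forall>V\<in>A. (\<lambda>z. U z + V z) \<in> A) \<and>
     (\<forall>c. \<forall>U\<in>A. (\<lambda>z. c * U z) \<in> A) \<and>
     (\<forall>U\<in>A. \<forall>V\<in>A. (\<lambda>z. U z * V z) \<in> A)"

definition self_adjoint :: "(real \<times> real \<Rightarrow> complex) set \<Rightarrow> bool" where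
  "self_adjoint A \<longleftrightarrow> (\<forall>U\<in>A. (\<lambda>z. cnj (U z)) \<in> A)"

text \<open>A smooth closed curve: the image of a smooth T-periodic immersion of R into R^2
  that is injective on one period (i.e. a smooth embedded circle).\<close>
definition smooth_closed_curve :: "(real \<times> real) set \<Rightarrow> bool" where
  "smooth_closed_curve C \<longleftrightarrow> (\<exists>c :: real \<Rightarrow> real \<times> real. \<exists>T>0.
     Cinf c \<and> (\<forall>t. c (t + T) = c t) \<and> inj_on c {0..<T} \<and>
     (\<forall>t. vector_derivative c (at t) \<noteq> 0) \<and> C = c ` {0..T})"

definition separates_compact_submanifolds :: "(real \<times> real \<Rightarrow> complex) set \<Rightarrow> bool" where
  "separates_compact_submanifolds A \<longleftrightarrow>
     (\<forall>\<C>. finite \<C> \<and> (\<forall>C\<in>\<C>. smooth_closed_curve C) \<and>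
          (\<forall>C1\<in>\<C>. \<forall>C2\<in>\<C>. C1 \<noteq> C2 \<longrightarrow> C1 \<inter> C2 = {})
       \<longrightarrow> (\<exists>f\<in>A. (\<forall>z. f z \<in> \<real>) \<and>
              (\<forall>C1\<in>\<C>. \<forall>C2\<in>\<C>. C1 \<noteq> C2 \<longrightarrow> (\<forall>x\<in>C1. \<forall>y\<in>C2. f x \<noteq> f y))))"

text \<open>Dimension over C of the quotient V/W (V, W sets of functions, W a subspace of V):
  the supremum of the sizes of finite subsets of V that are linearly independent modulo W.\<close>
definition indep_mod :: "(real \<times> real \<Rightarrow> complex) set \<Rightarrow> (real \<times> real \<Rightarrow> complex) set \<Rightarrow> bool" where
  "indep_mod W S \<longleftrightarrow> (\<forall>c :: (real \<times> real \<Rightarrow> complex) \<Rightarrow> complex.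
      (\<lambda>z. \<Sum>u\<in>S. c u * u z) \<in> W \<longrightarrow> (\<forall>u\<in>S. c u = 0))"

definition quotient_dim :: "(real \<times> real \<Rightarrow> complex) set \<Rightarrow> (real \<times> real \<Rightarrow> complex) set \<Rightarrow> enat" where
  "quotient_dim V W = (SUP S \<in> {S. finite S \<and> S \<subseteq> V \<and> indep_mod W S}. enat (card S))"

definition is_solution :: "(real \<times> real \<Rightarrow> real) \<Rightarrow> (real \<times> real \<Rightarrow> real) \<Rightarrow> (real \<Rightarrow> real \<times> real) \<Rightarrow> bool" where
  "is_solution P Q \<gamma> \<longleftrightarrow> (\<forall>t. (\<gamma> has_vector_derivative (P (\<gamma> t), Q (\<gamma> t))) (at t))"

definition closed_orbits :: "(real \<times> real \<Rightarrow> real) \<Rightarrow> (real \<times> real \<Rightarrow> real) \<Rightarrow> (real \<times> real) set set" where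
  "closed_orbits P Q = {range \<gamma> | \<gamma>. is_solution P Q \<gamma> \<and>
      (\<exists>T>0. \<forall>t. \<gamma> (t + T) = \<gamma> t) \<and> (\<exists>s t. \<gamma> s \<noteq> \<gamma> t)}"

definition ecard :: "'a set \<Rightarrow> enat" where
  "ecard S = (if finite S then enat (card S) else \<infinity>)"

end

theory Submission
  imports Defs
begin


lemma Cinf_diff: "Cinf f \<Longrightarrow> f differentiable (at x)"
  by (erule Cinf.cases) auto

lemma Cinf_deriv: "Cinf f \<Longrightarrow> Cinf (\<lambda>x. frechet_derivative f (at x) v)"
  by (erule Cinf.cases) auto

lemma Cinf_has_deriv: "Cinf f \<Longrightarrow> (f has_derivative frechet_derivative f (at x)) (at x)"
  using Cinf_diff frechet_derivative_works by blast

lemma Cinf_cont: "Cinf f \<Longrightarrow> continuous_on S f"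
  by (meson Cinf_diff continuous_at_imp_continuous_on differentiable_imp_continuous_within)

lemma Cinf_linear:
  assumes "bounded_linear L"
  shows "Cinf L"
proof -
  have "Cinf g" if "g = L \<or> (\<exists>c. g = (\<lambda>x. c))" for g :: "'a \<Rightarrow> 'b"
    using that
  proof (coinduction arbitrary: g)
    case Cinf
    then show ?case
    proof
      assume gL: "g = L"
      have d: "\<And>x. frechet_derivative L (at x) = L"
        using assms by (metis bounded_linear_imp_has_derivative frechet_derivative_at)
      show ?thesis using gL d assms
        by (auto intro: bounded_linear_imp_differentiable)
    next
      assume "\<exists>c. g = (\<lambda>x. c)"
      then obtain c where gc: "g = (\<lambda>x. c)" by blast
      have d: "\<And>x. frechet_derivative (\<lambda>x. c) (at x) = (\<lambda>h. 0)"
        by (metis has_derivative_const frechet_derivative_at)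
      show ?thesis using gc d by auto
    qed
  qed
  then show ?thesis by blast
qed

lemma Cinf_const: "Cinf (\<lambda>x. c)"
proof -
  have "Cinf g" if "\<exists>c. g = (\<lambda>x. c)" for g :: "'a \<Rightarrow> 'b"
    using that
  proof (coinduction arbitrary: g)
    case Cinf
    then obtain c where gc: "g = (\<lambda>x. c)" by blast
    have d: "\<And>x. frechet_derivative (\<lambda>x. c) (at x) = (\<lambda>h. 0)"
      by (metis has_derivative_const frechet_derivative_at)
    show ?case using gc d by auto
  qed
  then show ?thesis by blast
qed

inductive_set SP :: "('a::euclidean_space \<Rightarrow> 'b::real_normed_vector) set" where
  base: "Cinf p \<Longrightarrow> Cinf H \<Longrightarrow> (\<lambda>z. p z *\<^sub>R H z) \<in> SP"
| add: "f \<in> SP \<Longrightarrow> g \<in> SP \<Longrightarrow> (\<lambda>z. f z + g z) \<in> SP"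

lemma SP_step:
  assumes "f \<in> SP"
  shows "(\<forall>x. f differentiable (at x)) \<and> (\<forall>v. (\<lambda>x. frechet_derivative f (at x) v) \<in> SP)"
  using assms
proof induction
  case (base p H)
  have hd: "\<And>x. ((\<lambda>z. p z *\<^sub>R H z) has_derivative
      (\<lambda>h. p x *\<^sub>R frechet_derivative H (at x) h + frechet_derivative p (at x) h *\<^sub>R H x)) (at x)"
    using Cinf_has_deriv[OF base(1)] Cinf_has_deriv[OF base(2)] by (rule has_derivative_scaleR)
  have fd: "\<And>x v. frechet_derivative (\<lambda>z. p z *\<^sub>R H z) (at x) v =
       p x *\<^sub>R frechet_derivative H (at x) v + frechet_derivative p (at x) v *\<^sub>R H x"
    by (simp add: frechet_derivative_at[OF hd, symmetric])
  show ?case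
  proof (intro conjI allI)
    fix x show "(\<lambda>z. p z *\<^sub>R H z) differentiable at x" using hd differentiable_def by blast
  next
    fix v
    have "(\<lambda>x. p x *\<^sub>R frechet_derivative H (at x) v + frechet_derivative p (at x) v *\<^sub>R H x) \<in> SP"
      by (rule SP.add; rule SP.base; (rule base | (rule Cinf_deriv, rule base)))
    then show "(\<lambda>x. frechet_derivative (\<lambda>z. p z *\<^sub>R H z) (at x) v) \<in> SP"
      by (simp add: fd)
  qed
next
  case (add f g)
  have hd: "\<And>x. ((\<lambda>z. f z + g z) has_derivative
      (\<lambda>h. frechet_derivative f (at x) h + frechet_derivative g (at x) h)) (at x)"
    using add by (intro has_derivative_add) (auto simp: frechet_derivative_works[symmetric])
  have fd: "\<And>x v. frechet_derivative (\<lambda>z. f z + g z) (at x) v =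
       frechet_derivative f (at x) v + frechet_derivative g (at x) v"
    by (simp add: frechet_derivative_at[OF hd, symmetric])
  show ?case
  proof (intro conjI allI)
    fix x show "(\<lambda>z. f z + g z) differentiable at x" using hd differentiable_def by blast
  next
    fix v show "(\<lambda>x. frechet_derivative (\<lambda>z. f z + g z) (at x) v) \<in> SP"
      using add by (simp add: fd SP.add)
  qed
qed

lemma SP_Cinf: "f \<in> SP \<Longrightarrow> Cinf f"
proof (coinduction arbitrary: f)
  case Cinf
  then show ?case using SP_step by blast
qed

lemma Cinf_scaleR: "Cinf p \<Longrightarrow> Cinf H \<Longrightarrow> Cinf (\<lambda>z. p z *\<^sub>R H z)"
  by (rule SP_Cinf[OF SP.base])

lemma Cinf_add:
  assumes "Cinf f" "Cinf g" shows "Cinf (\<lambda>z. f z + g z)"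
proof -
  have "(\<lambda>z. (\<lambda>_. 1::real) z *\<^sub>R f z + (\<lambda>_. 1::real) z *\<^sub>R g z) \<in> SP"
    using assms by (intro SP.add SP.base Cinf_const)
  then show ?thesis by (simp add: SP_Cinf)
qed

lemma Cinf_mult: "Cinf (p::_\<Rightarrow>real) \<Longrightarrow> Cinf q \<Longrightarrow> Cinf (\<lambda>z. p z * q z)"
  using Cinf_scaleR[of p q] by simp


lemma lin2:
  assumes "linear L"
  shows "L (a, b) = a *\<^sub>R L (1, 0) + b *\<^sub>R L (0, 1)"
proof -
  have "L (a, b) = L (a *\<^sub>R (1::real, 0::real) + b *\<^sub>R (0, 1))" by simp
  also have "\<dots> = a *\<^sub>R L (1, 0) + b *\<^sub>R L (0, 1)"
    by (simp only: linear_add[OF assms] linear_scale[OF assms])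
  finally show ?thesis .
qed

lemma comp_sol_deriv:
  assumes sol: "is_solution P Q \<gamma>" and d: "U differentiable (at (\<gamma> t))"
  shows "((\<lambda>t. U (\<gamma> t)) has_vector_derivative
     (P (\<gamma> t) *\<^sub>R frechet_derivative U (at (\<gamma> t)) (1,0) + Q (\<gamma> t) *\<^sub>R frechet_derivative U (at (\<gamma> t)) (0,1))) (at t)"
proof -
  have g: "(\<gamma> has_derivative (\<lambda>s. s *\<^sub>R (P (\<gamma> t), Q (\<gamma> t)))) (at t)"
    using sol unfolding is_solution_def has_vector_derivative_def by blast
  have u: "(U has_derivative frechet_derivative U (at (\<gamma> t))) (at (\<gamma> t))"
    using d frechet_derivative_works by blast
  have lin: "linear (frechet_derivative U (at (\<gamma> t)))"
    using u has_derivative_linear by blast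
  have "((\<lambda>t. U (\<gamma> t)) has_derivative (\<lambda>s. frechet_derivative U (at (\<gamma> t)) (s *\<^sub>R (P (\<gamma> t), Q (\<gamma> t))))) (at t)"
    using diff_chain_at[OF g u] by (simp add: o_def)
  moreover have "\<And>s. frechet_derivative U (at (\<gamma> t)) (s *\<^sub>R (P (\<gamma> t), Q (\<gamma> t))) =
     s *\<^sub>R (P (\<gamma> t) *\<^sub>R frechet_derivative U (at (\<gamma> t)) (1,0) + Q (\<gamma> t) *\<^sub>R frechet_derivative U (at (\<gamma> t)) (0,1))"
    by (simp only: linear_scale[OF lin] lin2[OF lin, of "P (\<gamma> t)" "Q (\<gamma> t)"])
  ultimately show ?thesis unfolding has_vector_derivative_def by simp
qed

lemma sol_Cinf:
  assumes sol: "is_solution P Q \<gamma>" and P: "Cinf P" and Q: "Cinf Q"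
  shows "Cinf \<gamma>"
proof -
  have "Cinf g" if "\<exists>H::real\<times>real\<Rightarrow>real\<times>real. Cinf H \<and> g = (\<lambda>t. H (\<gamma> t))" for g
    using that
  proof (coinduction arbitrary: g)
    case Cinf
    then obtain H :: "real\<times>real\<Rightarrow>real\<times>real" where H: "Cinf H" and gH: "g = (\<lambda>t. H (\<gamma> t))" by blast
    define Hx where "Hx z = frechet_derivative H (at z) (1,0)" for z
    define Hy where "Hy z = frechet_derivative H (at z) (0,1)" for z
    have hd: "\<And>t. (g has_derivative (\<lambda>s. s *\<^sub>R (P (\<gamma> t) *\<^sub>R Hx (\<gamma> t) + Q (\<gamma> t) *\<^sub>R Hy (\<gamma> t)))) (at t)"
      using comp_sol_deriv[OF sol Cinf_diff[OF H]] unfolding gH Hx_def Hy_def has_vector_derivative_def .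
    have fd: "\<And>t v. frechet_derivative g (at t) v = v *\<^sub>R (P (\<gamma> t) *\<^sub>R Hx (\<gamma> t) + Q (\<gamma> t) *\<^sub>R Hy (\<gamma> t))"
      by (simp add: frechet_derivative_at[OF hd, symmetric])
    have "Cinf (\<lambda>z. v *\<^sub>R (P z *\<^sub>R Hx z + Q z *\<^sub>R Hy z))" for v
      unfolding Hx_def Hy_def
      by (rule Cinf_scaleR[OF Cinf_const], rule Cinf_add; rule Cinf_scaleR; (rule P | rule Q | rule Cinf_deriv[OF H]))
    then have "\<forall>v. \<exists>H'::real\<times>real\<Rightarrow>real\<times>real. Cinf H' \<and> (\<lambda>t. frechet_derivative g (at t) v) = (\<lambda>t. H' (\<gamma> t))"
      unfolding fd by blast
    then show ?case using hd differentiable_def by blast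
  qed
  moreover have "Cinf (\<lambda>z::real\<times>real. z)" by (rule Cinf_linear) (simp add: bounded_linear_ident)
  ultimately show ?thesis by force
qed


lemma Cinf_F:
  fixes P Q :: "real\<times>real \<Rightarrow> real"
  shows "Cinf P \<Longrightarrow> Cinf Q \<Longrightarrow> Cinf (\<lambda>z. (P z, Q z))"
proof -
  assume P: "Cinf P" and Q: "Cinf Q"
  have "Cinf (\<lambda>z. P z *\<^sub>R (1::real,0::real) + Q z *\<^sub>R (0,1))"
    by (rule Cinf_add; rule Cinf_scaleR; (rule P | rule Q | rule Cinf_const))
  then show ?thesis by simp
qed

lemma Cinf_lipschitz:
  fixes F :: "real\<times>real \<Rightarrow> real\<times>real"
  assumes F: "Cinf F"
  shows "\<exists>L\<ge>0. \<forall>x\<in>cball x0 r. \<forall>y\<in>cball x0 r. norm (F x - F y) \<le> L * norm (x - y)"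
proof -
  define Fx where "Fx z = frechet_derivative F (at z) (1,0)" for z
  define Fy where "Fy z = frechet_derivative F (at z) (0,1)" for z
  have cx: "continuous_on (cball x0 r) Fx" unfolding Fx_def by (rule Cinf_cont[OF Cinf_deriv[OF F]])
  have cy: "continuous_on (cball x0 r) Fy" unfolding Fy_def by (rule Cinf_cont[OF Cinf_deriv[OF F]])
  have "bounded (Fx ` cball x0 r)"
    by (rule compact_imp_bounded[OF compact_continuous_image[OF cx compact_cball]])
  then obtain B1 where B1: "B1 > 0" "\<forall>z\<in>Fx ` cball x0 r. norm z \<le> B1"
    unfolding bounded_pos by blast
  have "bounded (Fy ` cball x0 r)"
    by (rule compact_imp_bounded[OF compact_continuous_image[OF cy compact_cball]])
  then obtain B2 where B2: "B2 > 0" "\<forall>z\<in>Fy ` cball x0 r. norm z \<le> B2"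
    unfolding bounded_pos by blast
  have on: "onorm (frechet_derivative F (at z)) \<le> B1 + B2" if z: "z \<in> cball x0 r" for z
  proof (rule onorm_le)
    fix v :: "real \<times> real"
    obtain a b where v: "v = (a, b)" by (cases v)
    have lin: "linear (frechet_derivative F (at z))"
      using Cinf_has_deriv[OF F] has_derivative_linear by blast
    have "norm (frechet_derivative F (at z) v) = norm (a *\<^sub>R Fx z + b *\<^sub>R Fy z)"
      unfolding v Fx_def Fy_def by (simp only: lin2[OF lin, of a b])
    also have "\<dots> \<le> \<bar>a\<bar> * norm (Fx z) + \<bar>b\<bar> * norm (Fy z)"
      by (metis norm_scaleR norm_triangle_ineq)
    also have "\<dots> \<le> norm v * B1 + norm v * B2"
    proof (rule add_mono; rule mult_mono)
      show "\<bar>a\<bar> \<le> norm v" using norm_fst_le[of a b] v by simp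
      show "\<bar>b\<bar> \<le> norm v" using norm_snd_le[of b a] v by simp
      show "norm (Fx z) \<le> B1" using B1 z by blast
      show "norm (Fy z) \<le> B2" using B2 z by blast
    qed auto
    finally show "norm (frechet_derivative F (at z) v) \<le> (B1 + B2) * norm v"
      by (simp add: algebra_simps)
  qed
  have "\<forall>x\<in>cball x0 r. \<forall>y\<in>cball x0 r. norm (F x - F y) \<le> (B1 + B2) * norm (x - y)"
  proof (intro ballI)
    fix x y assume xy: "x \<in> cball x0 r" "y \<in> cball x0 r"
    show "norm (F x - F y) \<le> (B1 + B2) * norm (x - y)"
      using differentiable_bound[OF convex_cball, where f=F and f'="\<lambda>x. frechet_derivative F (at x)" and B="B1+B2"]
        has_derivative_at_withinI[OF Cinf_has_deriv[OF F]] on xy by blast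
  qed
  then show ?thesis using B1 B2 by (intro exI[of _ "B1+B2"]) auto
qed


lemma ode_unique:
  fixes F :: "real\<times>real \<Rightarrow> real\<times>real"
  assumes F: "Cinf F"
    and s1: "\<And>t. (g1 has_vector_derivative F (g1 t)) (at t)"
    and s2: "\<And>t. (g2 has_vector_derivative F (g2 t)) (at t)"
    and eq0: "g1 t0 = g2 t0"
  shows "g1 t = g2 t"
proof -
  define S where "S = {t. g1 t = g2 t}"
  have c1: "continuous_on UNIV g1"
    using s1 has_vector_derivative_continuous continuous_at_imp_continuous_on by blast
  have c2: "continuous_on UNIV g2"
    using s2 has_vector_derivative_continuous continuous_at_imp_continuous_on by blast
  have closed: "closed S" unfolding S_def by (rule closed_Collect_eq[OF c1 c2])
  have "open S"
    unfolding open_dist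
  proof (intro ballI)
    fix t1 assume "t1 \<in> S"
    then have e1: "g1 t1 = g2 t1" by (simp add: S_def)
    define x1 where "x1 = g1 t1"
    obtain L where L: "L \<ge> 0" "\<forall>x\<in>cball x1 1. \<forall>y\<in>cball x1 1. norm (F x - F y) \<le> L * norm (x - y)"
      using Cinf_lipschitz[OF F] by blast
    obtain d1 where d1: "d1 > 0" "\<forall>t. dist t t1 < d1 \<longrightarrow> dist (g1 t) (g1 t1) < 1"
      using c1 continuous_on_eq_continuous_at[of UNIV g1] continuous_at_eps_delta
      by (metis open_UNIV UNIV_I zero_less_one)
    obtain d2 where d2: "d2 > 0" "\<forall>t. dist t t1 < d2 \<longrightarrow> dist (g2 t) (g2 t1) < 1"
      using c2 continuous_on_eq_continuous_at[of UNIV g2] continuous_at_eps_delta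
      by (metis open_UNIV UNIV_I zero_less_one)
    define \<delta> where "\<delta> = min d1 d2"
    have dpos: "\<delta> > 0" using d1 d2 by (simp add: \<delta>_def)
    have inb: "g1 t \<in> cball x1 1 \<and> g2 t \<in> cball x1 1" if "dist t t1 < \<delta>" for t
      using that d1 d2 e1 unfolding \<delta>_def x1_def by (auto simp: dist_commute less_imp_le)
    define d where "d t = (g1 t - g2 t) \<bullet> (g1 t - g2 t)" for t
    define d' where "d' t = 2 * ((g1 t - g2 t) \<bullet> (F (g1 t) - F (g2 t)))" for t
    have dd: "(d has_real_derivative d' t) (at t)" for t
    proof -
      have v: "((\<lambda>t. g1 t - g2 t) has_derivative (\<lambda>h. h *\<^sub>R (F (g1 t) - F (g2 t)))) (at t)"
        using has_vector_derivative_diff[OF s1 s2] unfolding has_vector_derivative_def .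
      have "(d has_derivative (\<lambda>h. (g1 t - g2 t) \<bullet> (h *\<^sub>R (F (g1 t) - F (g2 t))) + (h *\<^sub>R (F (g1 t) - F (g2 t))) \<bullet> (g1 t - g2 t))) (at t)"
        unfolding d_def by (rule has_derivative_inner[OF v v])
      moreover have "(\<lambda>h. (g1 t - g2 t) \<bullet> (h *\<^sub>R (F (g1 t) - F (g2 t))) + (h *\<^sub>R (F (g1 t) - F (g2 t))) \<bullet> (g1 t - g2 t)) = (\<lambda>h. d' t * h)"
        unfolding d'_def by (auto simp: inner_commute algebra_simps)
      ultimately show ?thesis unfolding has_field_derivative_def by simp
    qed
    have dnn: "d t \<ge> 0" for t unfolding d_def by simp
    have dbound: "\<bar>d' t\<bar> \<le> 2 * L * d t" if "dist t t1 < \<delta>" for t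
    proof -
      have "\<bar>(g1 t - g2 t) \<bullet> (F (g1 t) - F (g2 t))\<bar> \<le> norm (g1 t - g2 t) * norm (F (g1 t) - F (g2 t))"
        by (rule Cauchy_Schwarz_ineq2)
      also have "\<dots> \<le> norm (g1 t - g2 t) * (L * norm (g1 t - g2 t))"
        using L inb[OF that] by (intro mult_left_mono) auto
      also have "\<dots> = L * d t" unfolding d_def by (simp add: power2_norm_eq_inner[symmetric] power2_eq_square)
      finally show ?thesis unfolding d'_def by simp
    qed
    have d0: "d t1 = 0" unfolding d_def using e1 by simp
    show "\<exists>e>0. \<forall>t. dist t t1 < e \<longrightarrow> t \<in> S"
    proof (intro exI[of _ \<delta>] conjI allI impI dpos)
      fix t assume tt: "dist t t1 < \<delta>"
      have "d t = 0"
      proof (cases "t1 \<le> t")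
        case True
        define e where "e s = exp (- (2*L) * s) * d s" for s
        have "e t \<le> e t1"
        proof (rule DERIV_nonpos_imp_nonincreasing[OF True])
          fix s assume s: "t1 \<le> s" "s \<le> t"
          have ds: "dist s t1 < \<delta>" using s tt by (simp add: dist_real_def)
          have "(e has_real_derivative exp (- (2*L) * s) * d' s + exp (- (2*L) * s) * (- (2*L)) * d s) (at s)"
            unfolding e_def by (auto intro!: derivative_eq_intros dd)
          moreover have "exp (- (2*L) * s) * d' s + exp (- (2*L) * s) * (- (2*L)) * d s \<le> 0"
          proof -
            have "d' s \<le> 2 * L * d s" using dbound[OF ds] by simp
            then have "exp (- (2*L) * s) * d' s \<le> exp (- (2*L) * s) * (2 * L * d s)"
              by (intro mult_left_mono) auto
            then show ?thesis by (simp add: algebra_simps)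
          qed
          ultimately show "\<exists>y. (e has_real_derivative y) (at s) \<and> y \<le> 0" by blast
        qed
        then have "e t \<le> 0" using d0 by (simp add: e_def)
        then have "d t \<le> 0" unfolding e_def by (simp add: mult_le_0_iff)
        then show ?thesis using dnn[of t] by simp
      next
        case False
        then have le: "t \<le> t1" by simp
        define e where "e s = exp ((2*L) * s) * d s" for s
        have "e t \<le> e t1"
        proof (rule DERIV_nonneg_imp_nondecreasing[OF le])
          fix s assume s: "t \<le> s" "s \<le> t1"
          have ds: "dist s t1 < \<delta>" using s tt by (simp add: dist_real_def)
          have "(e has_real_derivative exp ((2*L) * s) * d' s + exp ((2*L) * s) * (2*L) * d s) (at s)"
            unfolding e_def by (auto intro!: derivative_eq_intros dd)
          moreover have "0 \<le> exp ((2*L) * s) * d' s + exp ((2*L) * s) * (2*L) * d s"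
          proof -
            have "- (2 * L * d s) \<le> d' s" using dbound[OF ds] by simp
            then have "exp ((2*L) * s) * (- (2 * L * d s)) \<le> exp ((2*L) * s) * d' s"
              by (intro mult_left_mono) auto
            then show ?thesis by (simp add: algebra_simps)
          qed
          ultimately show "\<exists>y. (e has_real_derivative y) (at s) \<and> 0 \<le> y" by blast
        qed
        then have "e t \<le> 0" using d0 by (simp add: e_def)
        then have "d t \<le> 0" unfolding e_def by (simp add: mult_le_0_iff)
        then show ?thesis using dnn[of t] by simp
      qed
      then show "t \<in> S" unfolding S_def d_def by simp
    qed
  qed
  moreover have "t0 \<in> S" using eq0 by (simp add: S_def)
  ultimately have "S = UNIV" using closed clopen by blast
  then have "t \<in> S" by simp
  then show ?thesis by (simp add: S_def)
qed


lemma sol_iff: "is_solution P Q g \<longleftrightarrow> (\<forall>t. (g has_vector_derivative (\<lambda>z. (P z, Q z)) (g t)) (at t))"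
  by (simp add: is_solution_def)

lemma sol_unique:
  assumes P: "Cinf P" and Q: "Cinf Q" and s1: "is_solution P Q g1" and s2: "is_solution P Q g2"
    and e: "g1 t0 = g2 t0"
  shows "g1 t = g2 t"
  using ode_unique[OF Cinf_F[OF P Q], of g1 g2 t0 t] s1 s2 e by (simp add: sol_iff)

lemma sol_shift:
  assumes s: "is_solution P Q g"
  shows "is_solution P Q (\<lambda>t. g (t + c))"
  unfolding is_solution_def
proof
  fix t
  have "((\<lambda>t. t + c) has_real_derivative 1) (at t)" by (auto intro!: derivative_eq_intros)
  then have d: "((\<lambda>t. t + c) has_vector_derivative 1) (at t)"
    using has_real_derivative_iff_has_vector_derivative by blast
  have "(g \<circ> (\<lambda>t. t + c) has_vector_derivative 1 *\<^sub>R (P (g (t + c)), Q (g (t + c)))) (at t)"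
    using vector_diff_chain_at[OF d] s unfolding is_solution_def by blast
  then show "((\<lambda>t. g (t + c)) has_vector_derivative (P (g (t + c)), Q (g (t + c)))) (at t)"
    by (simp add: o_def)
qed

lemma range_shift:
  fixes g :: "real \<Rightarrow> 'a" and c :: real
  shows "range (\<lambda>t. g (t + c)) = range g"
proof
  show "range (\<lambda>t. g (t + c)) \<subseteq> range g" by auto
  show "range g \<subseteq> range (\<lambda>t. g (t + c))"
  proof
    fix x assume "x \<in> range g"
    then obtain s where "x = g s" by auto
    then have "x = (\<lambda>t. g (t + c)) (s - c)" by simp
    then show "x \<in> range (\<lambda>t. g (t + c))" by blast
  qed
qed

lemma orbits_disjoint:
  assumes P: "Cinf P" and Q: "Cinf Q" and s1: "is_solution P Q g1" and s2: "is_solution P Q g2"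
    and x: "x \<in> range g1" "x \<in> range g2"
  shows "range g1 = range g2"
proof -
  obtain s where st1: "x = g1 s" using x(1) by blast
  obtain t where st2: "x = g2 t" using x(2) by blast
  note st = st1 st2
  have "(\<lambda>u. g1 (u + s)) u = (\<lambda>u. g2 (u + t)) u" for u
    by (rule sol_unique[OF P Q sol_shift[OF s1] sol_shift[OF s2], of 0]) (use st in simp)
  then have "(\<lambda>u. g1 (u + s)) = (\<lambda>u. g2 (u + t))" by blast
  then have "range (\<lambda>u. g1 (u + s)) = range (\<lambda>u. g2 (u + t))" by (rule arg_cong)
  then show ?thesis by (simp add: range_shift)
qed

lemma sol_nonzero:
  assumes P: "Cinf P" and Q: "Cinf Q" and s: "is_solution P Q g" and nc: "g a \<noteq> g b"
  shows "(P (g t), Q (g t)) \<noteq> 0"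
proof
  assume z: "(P (g t), Q (g t)) = 0"
  have sc: "is_solution P Q (\<lambda>_. g t)"
  proof -
    have c0: "\<And>ta. ((\<lambda>_. g t) has_vector_derivative ((0,0)::real\<times>real)) (at ta)"
      using has_vector_derivative_const[of "g t"] by (metis zero_prod_def)
    show ?thesis unfolding is_solution_def using z c0 by simp
  qed
  have "g a = g t" by (rule sol_unique[OF P Q s sc, of t]) simp
  moreover have "g b = g t" by (rule sol_unique[OF P Q s sc, of t]) simp
  ultimately show False using nc by simp
qed

lemma sol_local_inj:
  assumes P: "Cinf P" and Q: "Cinf Q" and s: "is_solution P Q g" and nz: "(P (g t0), Q (g t0)) \<noteq> 0"
  shows "\<exists>\<delta>>0. \<forall>r. 0 < \<bar>r\<bar> \<and> \<bar>r\<bar> < \<delta> \<longrightarrow> g (t0 + r) \<noteq> g t0"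
proof -
  define F where "F z = (P z, Q z)" for z
  define v where "v = F (g t0)"
  have vpos: "norm v > 0" using nz by (simp add: v_def F_def)
  have cg: "continuous_on UNIV g"
    using s unfolding is_solution_def
    using has_vector_derivative_continuous continuous_at_imp_continuous_on by blast
  have cF: "continuous_on UNIV F" using Cinf_cont[OF Cinf_F[OF P Q]] unfolding F_def .
  have "continuous_on UNIV (F \<circ> g)"
    using continuous_on_compose[OF cg continuous_on_subset[OF cF subset_UNIV]] .
  then have isc: "isCont (F \<circ> g) t0" using continuous_on_eq_continuous_at[of UNIV "F \<circ> g"] by simp
  have hv: "norm v / 2 > 0" using vpos by simp
  obtain \<delta> where \<delta>: "\<delta> > 0" "\<forall>x. dist x t0 < \<delta> \<longrightarrow> dist ((F \<circ> g) x) ((F \<circ> g) t0) < norm v / 2"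
    using isc[unfolded continuous_at_eps_delta] hv by blast
  show ?thesis
  proof (intro exI[of _ \<delta>] conjI allI impI \<delta>(1))
    fix r assume r: "0 < \<bar>r\<bar> \<and> \<bar>r\<bar> < \<delta>"
    have "norm (g (t0 + r) - g t0 - ((t0 + r) - t0) *\<^sub>R F (g t0)) \<le> norm ((t0 + r) - t0) * (norm v / 2)"
    proof (rule vector_differentiable_bound_linearization[where S="ball t0 \<delta>" and f'="\<lambda>t. F (g t)"])
      show "\<And>x. x \<in> ball t0 \<delta> \<Longrightarrow> (g has_vector_derivative F (g x)) (at x within ball t0 \<delta>)"
        using s unfolding is_solution_def F_def by (blast intro: has_vector_derivative_at_within)
      show "closed_segment t0 (t0 + r) \<subseteq> ball t0 \<delta>"
        by (rule closed_segment_subset) (use r \<delta> in \<open>auto simp: dist_real_def\<close>)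
      show "\<And>x. x \<in> ball t0 \<delta> \<Longrightarrow> norm (F (g x) - F (g t0)) \<le> norm v / 2"
        using \<delta> by (auto simp: dist_norm dist_commute less_imp_le)
      show "t0 \<in> ball t0 \<delta>" using \<delta> by simp
    qed
    then have "norm (g (t0 + r) - g t0 - r *\<^sub>R v) \<le> \<bar>r\<bar> * (norm v / 2)" by (simp add: v_def)
    moreover have "norm (r *\<^sub>R v) = \<bar>r\<bar> * norm v" by simp
    ultimately have "norm (g (t0 + r) - g t0) \<ge> \<bar>r\<bar> * norm v / 2"
      using norm_triangle_ineq2[of "r *\<^sub>R v" "g (t0 + r) - g t0"]
      by (simp add: norm_minus_commute algebra_simps)
    moreover have "\<bar>r\<bar> * norm v / 2 > 0" using r vpos by simp
    ultimately show "g (t0 + r) \<noteq> g t0" by auto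
  qed
qed


lemma periodic_nat:
  fixes g :: "real \<Rightarrow> 'a" and T :: real
  assumes "\<forall>t. g (t + T) = g t"
  shows "g (t + real m * T) = g t"
proof (induction m)
  case (Suc m)
  have "g (t + real (Suc m) * T) = g ((t + real m * T) + T)" by (simp add: algebra_simps)
  also have "\<dots> = g (t + real m * T)" using assms by blast
  finally show ?case using Suc by simp
qed simp

lemma periodic_int:
  fixes g :: "real \<Rightarrow> 'a" and T :: real
  assumes "\<forall>t. g (t + T) = g t"
  shows "g (t + real_of_int n * T) = g t"
proof (cases "n \<ge> 0")
  case True
  then obtain m where "n = int m" by (metis nonneg_int_cases)
  then show ?thesis using periodic_nat[OF assms] by simp
next
  case False
  then obtain m where m: "n = - int m" by (metis neg_int_cases less_le not_le)
  have "g ((t - real m * T) + real m * T) = g (t - real m * T)" by (rule periodic_nat[OF assms])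
  then show ?thesis using m by simp
qed

lemma periodic_range:
  fixes g :: "real \<Rightarrow> 'a" and T :: real
  assumes T: "T > 0" and per: "\<forall>t. g (t + T) = g t"
  shows "range g = g ` {0..T}"
proof
  show "g ` {0..T} \<subseteq> range g" by auto
  show "range g \<subseteq> g ` {0..T}"
  proof
    fix x assume "x \<in> range g"
    then obtain t where x: "x = g t" by auto
    define n where "n = \<lfloor>t / T\<rfloor>"
    define r where "r = t - real_of_int n * T"
    have "real_of_int n \<le> t / T" "t / T < real_of_int n + 1" unfolding n_def by linarith+
    then have "real_of_int n * T \<le> t" "t < (real_of_int n + 1) * T"
      using T by (simp_all add: field_simps)
    then have r0: "0 \<le> r" "r \<le> T" unfolding r_def by (simp_all add: algebra_simps)
    have "g t = g (r + real_of_int n * T)" by (simp add: r_def)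
    also have "\<dots> = g r" by (rule periodic_int[OF per])
    finally show "x \<in> g ` {0..T}" using x r0 by auto
  qed
qed

lemma min_period:
  assumes P: "Cinf P" and Q: "Cinf Q" and s: "is_solution P Q g"
    and T: "T > 0" and per: "\<forall>t. g (t + T) = g t" and nc: "g a \<noteq> g b"
  shows "\<exists>T0>0. (\<forall>t. g (t + T0) = g t) \<and> inj_on g {0..<T0}"
proof -
  define Per where "Per = {\<tau>. \<tau> > 0 \<and> (\<forall>t. g (t + \<tau>) = g t)}"
  obtain \<delta> where \<delta>: "\<delta> > 0" "\<forall>r. 0 < \<bar>r\<bar> \<and> \<bar>r\<bar> < \<delta> \<longrightarrow> g (0 + r) \<noteq> g 0"
    using sol_local_inj[OF P Q s sol_nonzero[OF P Q s nc]] by blast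
  have big: "\<tau> \<ge> \<delta>" if "\<tau> \<in> Per" for \<tau>
  proof (rule ccontr)
    assume "\<not> \<delta> \<le> \<tau>"
    then have "g (0 + \<tau>) \<noteq> g 0" using \<delta> that by (auto simp: Per_def)
    moreover have "g (0 + \<tau>) = g 0" using that unfolding Per_def by blast
    ultimately show False by simp
  qed
  have ne: "Per \<noteq> {}" using T per by (auto simp: Per_def)
  have bdd: "bdd_below Per" using big by (meson bdd_below.I)
  define T0 where "T0 = Inf Per"
  have T0d: "T0 \<ge> \<delta>" unfolding T0_def using ne big by (rule cInf_greatest)
  have diff: "\<tau> - \<tau>' \<in> Per" if "\<tau> \<in> Per" "\<tau>' \<in> Per" "\<tau>' < \<tau>" for \<tau> \<tau>'
  proof -
    have "g (t + (\<tau> - \<tau>')) = g t" for t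
    proof -
      have "g (t + (\<tau> - \<tau>')) = g ((t - \<tau>') + \<tau>)" by (simp add: algebra_simps)
      also have "\<dots> = g (t - \<tau>')" using that by (auto simp: Per_def)
      also have "\<dots> = g ((t - \<tau>') + \<tau>')"
      proof -
        have pe: "\<forall>t. g (t + \<tau>') = g t" using that(2) by (simp add: Per_def)
        show ?thesis using pe[rule_format, of "t - \<tau>'"] by (rule sym)
      qed
      finally show ?thesis by simp
    qed
    then show ?thesis using that by (auto simp: Per_def)
  qed
  have T0in: "T0 \<in> Per"
  proof (rule ccontr)
    assume nin: "T0 \<notin> Per"
    have "Inf Per < T0 + \<delta>" using \<delta> by (simp add: T0_def)
    then obtain \<tau> where \<tau>: "\<tau> \<in> Per" "\<tau> < T0 + \<delta>" using cInf_lessD[OF ne] by blast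
    have "T0 \<le> \<tau>" unfolding T0_def using \<tau>(1) bdd by (rule cInf_lower)
    then have gt: "T0 < \<tau>" using nin \<tau> by (cases "T0 = \<tau>") auto
    then obtain \<tau>' where \<tau>': "\<tau>' \<in> Per" "\<tau>' < \<tau>" using cInf_lessD[OF ne] by (auto simp: T0_def)
    have "T0 \<le> \<tau>'" unfolding T0_def using \<tau>'(1) bdd by (rule cInf_lower)
    have "\<tau> - \<tau>' \<in> Per" by (rule diff[OF \<tau>(1) \<tau>'])
    then have "\<tau> - \<tau>' \<ge> \<delta>" by (rule big)
    then show False using \<open>T0 \<le> \<tau>'\<close> \<tau> by simp
  qed
  have inj: "inj_on g {0..<T0}"
  proof (rule inj_onI, rule ccontr)
    fix x y assume x: "x \<in> {0..<T0}" and y: "y \<in> {0..<T0}" and e: "g x = g y" and ne: "x \<noteq> y"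
    have key: "\<And>a b. a \<in> {0..<T0} \<Longrightarrow> b \<in> {0..<T0} \<Longrightarrow> a < b \<Longrightarrow> g a = g b \<Longrightarrow> False"
    proof -
      fix a b assume a: "a \<in> {0..<T0}" and b: "b \<in> {0..<T0}" and ab: "a < b" and gab: "g a = g b"
      have sh: "(\<lambda>u. g (u + a)) u = (\<lambda>u. g (u + b)) u" for u
        by (rule sol_unique[OF P Q sol_shift[OF s] sol_shift[OF s], of 0]) (use gab in simp)
      have "g (t + (b - a)) = g t" for t
        using sh[of "t - a"] by (simp add: algebra_simps)
      then have "b - a \<in> Per" using ab by (auto simp: Per_def)
      then have "T0 \<le> b - a" unfolding T0_def using bdd by (rule cInf_lower)
      then show False using a b by auto
    qed
    show False
    proof (cases "x < y")
      case True then show ?thesis using key[OF x y True e] by simp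
    next
      case False then have "y < x" using ne by simp
      then show ?thesis using key[OF y x _ e[symmetric]] by simp
    qed
  qed
  show ?thesis using T0in inj by (auto simp: Per_def)
qed

lemma orbit_curve:
  assumes P: "Cinf P" and Q: "Cinf Q" and Orb: "Orb \<in> closed_orbits P Q"
  shows "smooth_closed_curve Orb"
proof -
  obtain g T a b where g: "Orb = range g" "is_solution P Q g" "T > 0" "\<forall>t. g (t + T) = g t" "g a \<noteq> g b"
    using Orb unfolding closed_orbits_def by blast
  obtain T0 where T0: "T0 > 0" "\<forall>t. g (t + T0) = g t" "inj_on g {0..<T0}"
    using min_period[OF P Q g(2) g(3) g(4) g(5)] by blast
  have vd: "vector_derivative g (at t) \<noteq> 0" for t
  proof -
    have "vector_derivative g (at t) = (P (g t), Q (g t))"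
      using g(2) unfolding is_solution_def by (blast intro: vector_derivative_at)
    then show ?thesis using sol_nonzero[OF P Q g(2) g(5)] by simp
  qed
  show ?thesis
    unfolding smooth_closed_curve_def
    using sol_Cinf[OF g(2) P Q] T0 vd periodic_range[OF T0(1) T0(2)] g(1) by blast
qed


definition circ :: "real \<Rightarrow> real \<Rightarrow> real \<Rightarrow> real \<Rightarrow> real \<times> real" where
  "circ a b r t = (a + r * cos t, b + r * sin t)"

lemma trig_Cinf:
  "Cinf (\<lambda>t::real. (a + \<alpha> * cos t + \<beta> * sin t, b + \<gamma> * cos t + \<delta> * sin t))"
proof -
  have "Cinf g" if "\<exists>a b \<alpha> \<beta> \<gamma> \<delta>. g = (\<lambda>t::real. (a + \<alpha> * cos t + \<beta> * sin t, b + \<gamma> * cos t + \<delta> * sin t))" for g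
    using that
  proof (coinduction arbitrary: g)
    case Cinf
    then obtain a b \<alpha> \<beta> \<gamma> \<delta> where g: "g = (\<lambda>t::real. (a + \<alpha> * cos t + \<beta> * sin t, b + \<gamma> * cos t + \<delta> * sin t))"
      by blast
    have hd: "(g has_vector_derivative (\<beta> * cos t - \<alpha> * sin t, \<delta> * cos t - \<gamma> * sin t)) (at t)" for t
      unfolding g
      by (rule has_vector_derivative_Pair;
          auto intro!: derivative_eq_intros simp: has_real_derivative_iff_has_vector_derivative[symmetric])
    have fd: "frechet_derivative g (at t) v = v *\<^sub>R (\<beta> * cos t - \<alpha> * sin t, \<delta> * cos t - \<gamma> * sin t)" for t v
      by (simp add: frechet_derivative_at[OF hd[of t, unfolded has_vector_derivative_def], symmetric])
    have "(\<lambda>t. frechet_derivative g (at t) v) =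
       (\<lambda>t::real. (0 + (v * \<beta>) * cos t + (- v * \<alpha>) * sin t, 0 + (v * \<delta>) * cos t + (- v * \<gamma>) * sin t))" for v
      by (auto simp: fd algebra_simps)
    then show ?case using hd unfolding has_vector_derivative_def differentiable_def by blast
  qed
  then show ?thesis by blast
qed

lemma circ_curve:
  assumes r: "r > 0"
  shows "smooth_closed_curve (circ a b r ` {0..2*pi})"
  unfolding smooth_closed_curve_def
proof (intro exI[of _ "circ a b r"] exI[of _ "2*pi"] conjI allI)
  show "Cinf (circ a b r)"
    using trig_Cinf[of a r 0 b 0 r] unfolding circ_def by simp
  show "circ a b r (t + 2 * pi) = circ a b r t" for t by (simp add: circ_def)
  show "inj_on (circ a b r) {0..<2 * pi}"
  proof (rule inj_onI)
    fix s t assume s: "s \<in> {0..<2*pi}" and t: "t \<in> {0..<2*pi}" and e: "circ a b r s = circ a b r t"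
    then have "sin s = sin t \<and> cos s = cos t" using r by (simp add: circ_def)
    then obtain n :: int where n: "s = t + 2 * pi * real_of_int n" using sin_cos_eq_iff by blast
    have "\<bar>2 * pi * real_of_int n\<bar> < 2 * pi" using s t n by auto
    then have "\<bar>real_of_int n\<bar> < 1" by (simp add: abs_mult)
    then have "n = 0" by linarith
    then show "s = t" using n by simp
  qed
  show "vector_derivative (circ a b r) (at t) \<noteq> 0" for t
  proof -
    have hd: "(circ a b r has_vector_derivative (- r * sin t, r * cos t)) (at t)"
      unfolding circ_def
      by (rule has_vector_derivative_Pair;
          auto intro!: derivative_eq_intros simp: has_real_derivative_iff_has_vector_derivative[symmetric])
    have "(- r * sin t, r * cos t) \<noteq> 0"
    proof
      assume "(- r * sin t, r * cos t) = 0"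
      then have "sin t = 0" "cos t = 0" using r by (auto simp: zero_prod_def)
      then show False using sin_cos_squared_add[of t] by simp
    qed
    then show ?thesis using vector_derivative_at[OF hd] by simp
  qed
qed (use pi_gt_zero in auto)

lemma circ_dist: "dist (circ a b r t) (a, b) = \<bar>r\<bar>"
proof -
  have "dist (circ a b r t) (a, b) = sqrt ((r * cos t)^2 + (r * sin t)^2)"
    by (simp add: circ_def dist_Pair_Pair dist_real_def)
  also have "(r * cos t)^2 + (r * sin t)^2 = r^2"
    by (metis distrib_left mult.right_neutral power_mult_distrib sin_cos_squared_add2)
  finally show ?thesis by simp
qed

lemma weight:
  assumes sep: "separates_compact_submanifolds A" and pq: "p \<noteq> q"
  shows "\<exists>w\<in>A. (\<forall>z. w z \<in> \<real>) \<and> (w p \<noteq> 0 \<or> w q \<noteq> 0)"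
proof -
  obtain p1 p2 where p: "p = (p1, p2)" by (cases p)
  obtain q1 q2 where q: "q = (q1, q2)" by (cases q)
  define r where "r = dist p q / 3"
  have r: "r > 0" using pq by (simp add: r_def)
  define C1 where "C1 = circ (p1 + r) p2 r ` {0..2*pi}"
  define C2 where "C2 = circ (q1 + r) q2 r ` {0..2*pi}"
  have pC1: "p \<in> C1"
  proof -
    have "circ (p1 + r) p2 r pi = p" by (simp add: circ_def p)
    moreover have "pi \<in> {0..2*pi}" using pi_gt_zero by simp
    ultimately show ?thesis unfolding C1_def by (rule image_eqI[OF sym])
  qed
  have qC2: "q \<in> C2"
  proof -
    have "circ (q1 + r) q2 r pi = q" by (simp add: circ_def q)
    moreover have "pi \<in> {0..2*pi}" using pi_gt_zero by simp
    ultimately show ?thesis unfolding C2_def by (rule image_eqI[OF sym])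
  qed
  have cdist: "dist (p1 + r, p2) (q1 + r, q2) = 3 * r"
    by (simp add: r_def p q dist_Pair_Pair dist_real_def)
  have disj: "C1 \<inter> C2 = {}"
  proof (rule ccontr)
    assume "C1 \<inter> C2 \<noteq> {}"
    then obtain x where x1: "x \<in> C1" and x2: "x \<in> C2" by blast
    have d1: "dist x (p1 + r, p2) = r" using x1 r unfolding C1_def by (auto simp: circ_dist)
    have d2: "dist x (q1 + r, q2) = r" using x2 r unfolding C2_def by (auto simp: circ_dist)
    have "dist (p1 + r, p2) (q1 + r, q2) \<le> dist x (p1 + r, p2) + dist x (q1 + r, q2)"
      by (rule dist_triangle3)
    then show False using d1 d2 cdist r by simp
  qed
  have neq: "C1 \<noteq> C2" using disj pC1 by blast
  have "finite {C1, C2}" by simp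
  moreover have "\<forall>C\<in>{C1, C2}. smooth_closed_curve C"
    using circ_curve[OF r] unfolding C1_def C2_def by blast
  moreover have "\<forall>D1\<in>{C1, C2}. \<forall>D2\<in>{C1, C2}. D1 \<noteq> D2 \<longrightarrow> D1 \<inter> D2 = {}"
    using disj by blast
  ultimately obtain f where f: "f \<in> A" "\<forall>z. f z \<in> \<real>"
     "\<forall>D1\<in>{C1, C2}. \<forall>D2\<in>{C1, C2}. D1 \<noteq> D2 \<longrightarrow> (\<forall>x\<in>D1. \<forall>y\<in>D2. f x \<noteq> f y)"
    using sep unfolding separates_compact_submanifolds_def by (erule_tac x="{C1, C2}" in allE) blast
  then have "f p \<noteq> f q" using neq pC1 qC2 by blast
  then have "f p \<noteq> 0 \<or> f q \<noteq> 0" by auto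
  then show ?thesis using f by blast
qed


lemma sol_cont: "is_solution P Q g \<Longrightarrow> continuous_on S g"
  unfolding is_solution_def
  by (meson continuous_at_imp_continuous_on has_vector_derivative_continuous)

lemma comp_cont: "Cinf U \<Longrightarrow> is_solution P Q g \<Longrightarrow> continuous_on S (\<lambda>t. U (g t))"
proof -
  assume U: "Cinf U" and s: "is_solution P Q g"
  have "continuous_on S (U \<circ> g)"
    using continuous_on_compose[OF sol_cont[OF s] Cinf_cont[OF U]] .
  then show ?thesis by (simp add: o_def)
qed

lemma int_Dop_zero:
  fixes V :: "real\<times>real \<Rightarrow> complex"
  assumes s: "is_solution P Q g" and per: "\<forall>t. g (t + T) = g t" and T: "T > 0" and V: "Cinf V"
  shows "integral {0..T} (\<lambda>t. Dop P Q V (g t)) = 0"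
proof -
  have d: "((\<lambda>t. V (g t)) has_vector_derivative Dop P Q V (g t)) (at t)" for t
    using comp_sol_deriv[OF s Cinf_diff[OF V], of t]
    by (simp add: Dop_def partial_x_def partial_y_def scaleR_conv_of_real)
  have "((\<lambda>t. Dop P Q V (g t)) has_integral V (g T) - V (g 0)) {0..T}"
    by (rule fundamental_theorem_of_calculus) (use T d in \<open>auto intro: has_vector_derivative_at_within\<close>)
  moreover have "g T = g 0" using per[rule_format, of 0] by simp
  ultimately show ?thesis by (simp add: integral_unique)
qed

lemma int_lin:
  fixes S :: "(real\<times>real \<Rightarrow> complex) set"
  assumes fin: "finite S" and C: "\<forall>u\<in>S. Cinf u" and s: "is_solution P Q g"
  shows "integral {a..b} (\<lambda>t. \<Sum>u\<in>S. c u * u (g t)) = (\<Sum>u\<in>S. c u * integral {a..b} (\<lambda>t. u (g t)))"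
proof -
  have "integral {a..b} (\<lambda>t. \<Sum>u\<in>S. c u * u (g t)) = (\<Sum>u\<in>S. integral {a..b} (\<lambda>t. c u * u (g t)))"
  proof (rule integral_sum[OF fin])
    fix u assume "u \<in> S"
    then have "continuous_on {a..b} (\<lambda>t. u (g t))" using C s by (blast intro: comp_cont)
    then show "(\<lambda>t. c u * u (g t)) integrable_on {a..b}"
      by (intro integrable_continuous_interval continuous_on_mult continuous_on_const)
  qed
  then show ?thesis by (simp add: integral_mult_right)
qed

lemma int_pos:
  fixes h :: "real \<Rightarrow> real"
  assumes c: "continuous_on {0..T} h" and nn: "\<And>t. 0 \<le> h t" and T: "T > 0"
    and s: "s \<in> {0..T}" and hs: "h s > 0"
  shows "integral {0..T} h > 0"
proof -
  have i: "h integrable_on {0..T}" by (rule integrable_continuous_interval[OF c])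
  have ge: "integral {0..T} h \<ge> 0" by (rule integral_nonneg[OF i]) (use nn in auto)
  have "integral {0..T} h \<noteq> 0"
  proof
    assume z: "integral {0..T} h = 0"
    have hi: "(h has_integral 0) (cbox 0 T)"
      using i z by (metis cbox_interval has_integral_integrable_integral)
    have "h s = 0"
      by (rule has_integral_0_cbox_imp_0[OF _ _ hi]) (use c nn T s in \<open>auto simp: cbox_interval\<close>)
    then show False using hs by simp
  qed
  then show ?thesis using ge by simp
qed

lemma int_of_real:
  fixes h :: "real \<Rightarrow> real"
  assumes "h integrable_on S"
  shows "integral S (\<lambda>t. complex_of_real (h t)) = complex_of_real (integral S h)"
proof -
  have "((complex_of_real \<circ> h) has_integral complex_of_real (integral S h)) S"
    by (rule has_integral_linear[OF integrable_integral[OF assms] bounded_linear_of_real])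
  then show ?thesis by (simp add: o_def integral_unique)
qed


lemma sub_add: "subalgebra A \<Longrightarrow> U \<in> A \<Longrightarrow> V \<in> A \<Longrightarrow> (\<lambda>z. U z + V z) \<in> A"
  unfolding subalgebra_def by blast
lemma sub_mult: "subalgebra A \<Longrightarrow> U \<in> A \<Longrightarrow> V \<in> A \<Longrightarrow> (\<lambda>z. U z * V z) \<in> A"
  unfolding subalgebra_def by blast
lemma sub_scal: "subalgebra A \<Longrightarrow> U \<in> A \<Longrightarrow> (\<lambda>z. c * U z) \<in> A"
  unfolding subalgebra_def by blast
lemma sub_zero: "subalgebra A \<Longrightarrow> (\<lambda>z. 0) \<in> A"
  unfolding subalgebra_def by blast
lemma sub_Cinf: "subalgebra A \<Longrightarrow> U \<in> A \<Longrightarrow> Cinf U"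
  unfolding subalgebra_def by blast

lemma sub_sum:
  assumes A: "subalgebra A" and fin: "finite I"
  shows "(\<forall>i\<in>I. h i \<in> A) \<Longrightarrow> (\<lambda>z. \<Sum>i\<in>I. h i z) \<in> A"
  using fin
proof (induction I rule: finite_induct)
  case empty then show ?case using sub_zero[OF A] by simp
next
  case (insert x F)
  then have "(\<lambda>z. h x z + (\<Sum>i\<in>F. h i z)) \<in> A" by (intro sub_add[OF A]) auto
  then show ?case using insert by simp
qed

lemma sub_pow:
  assumes A: "subalgebra A" and \<phi>: "\<phi> \<in> A" and f: "f \<in> A"
  shows "(\<lambda>z. \<phi> z * f z ^ i) \<in> A"
proof (induction i)
  case 0 then show ?case using \<phi> by simp
next
  case (Suc i)
  then have "(\<lambda>z. (\<phi> z * f z ^ i) * f z) \<in> A" by (rule sub_mult[OF A _ f])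
  then show ?case by (simp add: algebra_simps)
qed

lemma sub_poly:
  assumes A: "subalgebra A" and \<phi>: "\<phi> \<in> A" and f: "f \<in> A"
  shows "(\<lambda>z. \<Sum>i\<le>n. c i * (\<phi> z * f z ^ i)) \<in> A"
proof (rule sub_sum[OF A], simp, intro ballI)
  fix i
  have "(\<lambda>z. \<phi> z * f z ^ i) \<in> A" by (rule sub_pow[OF A \<phi> f])
  then show "(\<lambda>z. c i * (\<phi> z * f z ^ i)) \<in> A" by (rule sub_scal[OF A])
qed

lemma diag_dom:
  fixes d :: "'i \<Rightarrow> complex" and m :: "'i \<Rightarrow> 'i \<Rightarrow> real"
  assumes fin: "finite I"
    and eq: "\<forall>i\<in>I. (\<Sum>j\<in>I. d j * complex_of_real (m i j)) = 0"
    and apos: "\<forall>i\<in>I. a i > 0"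
    and diag: "\<forall>i\<in>I. \<bar>m i i\<bar> \<ge> (1 - \<epsilon>) * a i"
    and off: "\<forall>i\<in>I. \<forall>j\<in>I. i \<noteq> j \<longrightarrow> \<bar>m i j\<bar> \<le> \<epsilon> * a i"
    and eps: "real (card I) * \<epsilon> < 1" "\<epsilon> \<ge> 0"
  shows "\<forall>i\<in>I. d i = 0"
proof (cases "I = {}")
  case True then show ?thesis by simp
next
  case False
  define M where "M = Max ((\<lambda>i. norm (d i)) ` I)"
  have "M \<in> (\<lambda>i. norm (d i)) ` I" unfolding M_def using fin False by (intro Max_in) auto
  then obtain i0 where i0: "i0 \<in> I" "norm (d i0) = M" by auto
  have Mge: "norm (d j) \<le> M" if "j \<in> I" for j
    unfolding M_def using fin that by (auto intro: Max_ge)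
  have M0: "M \<ge> 0" using i0 by (metis norm_ge_zero)
  have split: "(\<Sum>j\<in>I. d j * complex_of_real (m i0 j)) =
      d i0 * complex_of_real (m i0 i0) + (\<Sum>j\<in>I-{i0}. d j * complex_of_real (m i0 j))"
    using fin i0(1) by (simp add: sum.remove)
  have "d i0 * complex_of_real (m i0 i0) = - (\<Sum>j\<in>I-{i0}. d j * complex_of_real (m i0 j))"
    using eq i0(1) split by (simp add: eq_neg_iff_add_eq_0)
  then have "norm (d i0 * complex_of_real (m i0 i0)) = norm (\<Sum>j\<in>I-{i0}. d j * complex_of_real (m i0 j))"
    by simp
  also have "\<dots> \<le> (\<Sum>j\<in>I-{i0}. norm (d j * complex_of_real (m i0 j)))" by (rule norm_sum)
  also have "\<dots> \<le> (\<Sum>j\<in>I-{i0}. M * (\<epsilon> * a i0))"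
  proof (rule sum_mono)
    fix j assume j: "j \<in> I - {i0}"
    have "norm (d j * complex_of_real (m i0 j)) = norm (d j) * \<bar>m i0 j\<bar>" by (simp add: norm_mult)
    also have "\<dots> \<le> M * (\<epsilon> * a i0)"
      using j Mge[of j] off i0(1) M0 by (intro mult_mono) auto
    finally show "norm (d j * complex_of_real (m i0 j)) \<le> M * (\<epsilon> * a i0)" .
  qed
  also have "\<dots> = (real (card I) - 1) * (M * (\<epsilon> * a i0))"
    using fin i0(1) False by (simp add: card_Diff_singleton of_nat_diff card_gt_0_iff Suc_leI)
  finally have ineq: "M * \<bar>m i0 i0\<bar> \<le> (real (card I) - 1) * (M * (\<epsilon> * a i0))"
    using i0(2) by (simp add: norm_mult)
  have "M * ((1 - \<epsilon>) * a i0) \<le> M * \<bar>m i0 i0\<bar>"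
    using diag i0(1) M0 by (intro mult_left_mono) auto
  with ineq have "M * ((1 - \<epsilon>) * a i0) \<le> (real (card I) - 1) * (M * (\<epsilon> * a i0))" by linarith
  then have "M * a i0 * (1 - real (card I) * \<epsilon>) \<le> 0" by (simp add: algebra_simps)
  moreover have "a i0 * (1 - real (card I) * \<epsilon>) > 0" using apos i0(1) eps by simp
  ultimately have "M \<le> 0" by (metis mult.assoc mult_le_0_iff not_less)
  then have "M = 0" using M0 by simp
  then show ?thesis using Mge by fastforce
qed


definition orb_data where
  "orb_data P Q Orb g T \<longleftrightarrow> range g = Orb \<and> is_solution P Q g \<and> T > 0 \<and> (\<forall>t. g (t + T) = g t) \<and> (\<exists>a b. g a \<noteq> g b)"

lemma real_of_Re: "z \<in> \<real> \<Longrightarrow> z = complex_of_real (Re z)"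
  by (simp add: of_real_Re)

lemma lower_bound:
  fixes P Q :: "real\<times>real \<Rightarrow> real" and A :: "(real \<times> real \<Rightarrow> complex) set"
  assumes P: "Cinf P" and Q: "Cinf Q" and A: "subalgebra A" and sep: "separates_compact_submanifolds A"
    and fin: "finite Os" and sub: "Os \<subseteq> closed_orbits P Q"
  shows "enat (card Os) \<le> quotient_dim A (Dop P Q ` A)"
proof -
  have "\<forall>Orb\<in>Os. \<exists>gT. orb_data P Q Orb (fst gT) (snd gT)"
  proof
    fix Orb assume "Orb \<in> Os"
    then have "Orb \<in> closed_orbits P Q" using sub by blast
    then have "\<exists>\<gamma>. Orb = range \<gamma> \<and> is_solution P Q \<gamma> \<and> (\<exists>T>0. \<forall>t. \<gamma> (t + T) = \<gamma> t) \<and> (\<exists>s t. \<gamma> s \<noteq> \<gamma> t)"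
      by (simp add: closed_orbits_def)
    then obtain g where g: "Orb = range g" "is_solution P Q g" "\<exists>T>0. \<forall>t. g (t + T) = g t" "\<exists>a b. g a \<noteq> g b"
      by blast
    from g(3) obtain T where "T > 0" "\<forall>t. g (t + T) = g t" by blast
    then have "orb_data P Q Orb (fst (g, T)) (snd (g, T))" using g unfolding orb_data_def by simp
    then show "\<exists>gT. orb_data P Q Orb (fst gT) (snd gT)" by blast
  qed
  from bchoice[OF this] obtain gT where gT: "\<forall>Orb\<in>Os. orb_data P Q Orb (fst (gT Orb)) (snd (gT Orb))"
    by blast
  define g where "g Orb = fst (gT Orb)" for Orb
  define T where "T Orb = snd (gT Orb)" for Orb
  have gO: "range (g Orb) = Orb" "is_solution P Q (g Orb)" "T Orb > 0"
    "\<forall>t. g Orb (t + T Orb) = g Orb t" "\<exists>a b. g Orb a \<noteq> g Orb b" if "Orb \<in> Os" for Orb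
    using gT that unfolding orb_data_def g_def T_def by auto
  have rng: "g Orb ` {0..T Orb} = Orb" if "Orb \<in> Os" for Orb
    using periodic_range[OF gO(3)[OF that] gO(4)[OF that]] gO(1)[OF that] by simp
  have gin: "g Orb t \<in> Orb" if "Orb \<in> Os" for Orb t
    using gO(1)[OF that] by blast

  have disj: "\<forall>O1\<in>Os. \<forall>O2\<in>Os. O1 \<noteq> O2 \<longrightarrow> O1 \<inter> O2 = {}"
  proof (intro ballI impI)
    fix O1 O2 assume o: "O1 \<in> Os" "O2 \<in> Os" "O1 \<noteq> O2"
    show "O1 \<inter> O2 = {}"
    proof (rule ccontr)
      assume "O1 \<inter> O2 \<noteq> {}"
      then obtain x where x: "x \<in> O1" "x \<in> O2" by blast
      have "range (g O1) = range (g O2)"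
        by (rule orbits_disjoint[OF P Q gO(2)[OF o(1)] gO(2)[OF o(2)], of x])
           (use x gO(1)[OF o(1)] gO(1)[OF o(2)] in auto)
      then show False using o gO(1) by metis
    qed
  qed
  have curves: "\<forall>C\<in>Os. smooth_closed_curve C" using orbit_curve[OF P Q] sub by blast
  obtain f where f: "f \<in> A" "\<forall>z. f z \<in> \<real>" "\<forall>O1\<in>Os. \<forall>O2\<in>Os. O1 \<noteq> O2 \<longrightarrow> (\<forall>x\<in>O1. \<forall>y\<in>O2. f x \<noteq> f y)"
    using sep fin curves disj unfolding separates_compact_submanifolds_def
    by (erule_tac x=Os in allE) blast

  have "\<forall>Orb\<in>Os. \<exists>w. w \<in> A \<and> (\<forall>z. w z \<in> \<real>) \<and> (\<exists>x\<in>Orb. w x \<noteq> 0)"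
  proof
    fix Orb assume o: "Orb \<in> Os"
    obtain a b where ab: "g Orb a \<noteq> g Orb b" using gO(5)[OF o] by blast
    obtain w where w: "w \<in> A" "\<forall>z. w z \<in> \<real>" "w (g Orb a) \<noteq> 0 \<or> w (g Orb b) \<noteq> 0"
      using weight[OF sep ab] by blast
    then show "\<exists>w. w \<in> A \<and> (\<forall>z. w z \<in> \<real>) \<and> (\<exists>x\<in>Orb. w x \<noteq> 0)"
      using gin[OF o, of a] gin[OF o, of b] by blast
  qed
  from bchoice[OF this] obtain w where w: "\<forall>Orb\<in>Os. w Orb \<in> A \<and> (\<forall>z. w Orb z \<in> \<real>) \<and> (\<exists>x\<in>Orb. w Orb x \<noteq> 0)"
    by blast
  define \<phi> where "\<phi> z = (\<Sum>Orb\<in>Os. w Orb z * w Orb z)" for z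
  have \<phi>A: "\<phi> \<in> A"
  proof -
    have "\<forall>Orb\<in>Os. (\<lambda>z. w Orb z * w Orb z) \<in> A"
    proof
      fix Orb assume "Orb \<in> Os"
      then have "w Orb \<in> A" using w by blast
      then show "(\<lambda>z. w Orb z * w Orb z) \<in> A" using sub_mult[OF A] by blast
    qed
    then have "(\<lambda>z. \<Sum>Orb\<in>Os. w Orb z * w Orb z) \<in> A" by (rule sub_sum[OF A fin])
    then show ?thesis by (simp add: \<phi>_def[abs_def])
  qed
  define \<phi>r where "\<phi>r z = (\<Sum>Orb\<in>Os. (Re (w Orb z))^2)" for z
  have \<phi>eq: "\<phi> z = complex_of_real (\<phi>r z)" for z
  proof -
    have e: "w Orb z * w Orb z = complex_of_real ((Re (w Orb z))^2)" if "Orb \<in> Os" for Orb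
    proof -
      from w that have "w Orb z \<in> \<real>" by blast
      then obtain r where r: "w Orb z = complex_of_real r" by (auto elim: Reals_cases)
      then show ?thesis by (simp add: power2_eq_square)
    qed
    show ?thesis unfolding \<phi>_def \<phi>r_def of_real_sum by (rule sum.cong) (simp_all add: e)
  qed
  have \<phi>nn: "\<phi>r z \<ge> 0" for z unfolding \<phi>r_def by (simp add: sum_nonneg)
  have \<phi>pos: "\<exists>x\<in>Orb. \<phi>r x > 0" if o: "Orb \<in> Os" for Orb
  proof -
    obtain x where x: "x \<in> Orb" "w Orb x \<noteq> 0" using w o by blast
    from w o have "w Orb x \<in> \<real>" by blast
    then obtain r where r: "w Orb x = complex_of_real r" by (auto elim: Reals_cases)
    have "Re (w Orb x) \<noteq> 0" using x(2) r by simp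
    then have "(Re (w Orb x))^2 > 0" by simp
    also have "(Re (w Orb x))^2 \<le> \<phi>r x" unfolding \<phi>r_def
      by (rule member_le_sum[OF o]) (auto simp: fin)
    finally show ?thesis using x by blast
  qed
  have \<phi>rc: "\<phi>r z = Re (\<phi> z)" for z by (simp add: \<phi>eq)
  have \<phi>C: "Cinf \<phi>" by (rule sub_Cinf[OF A \<phi>A])
  have fC: "Cinf f" by (rule sub_Cinf[OF A f(1)])
  define fr where "fr z = Re (f z)" for z
  have feq: "f z = complex_of_real (fr z)" for z unfolding fr_def using f(2) real_of_Re by blast
  have cont_g1: "continuous_on S (\<lambda>t. \<phi>r (g Orb t))" if "Orb \<in> Os" for Orb S
  proof -
    have "continuous_on S (\<lambda>t. \<phi> (g Orb t))" by (rule comp_cont[OF \<phi>C gO(2)[OF that]])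
    then show ?thesis unfolding \<phi>rc by (rule continuous_on_Re)
  qed
  have cont_g2: "continuous_on S (\<lambda>t. fr (g Orb t))" if "Orb \<in> Os" for Orb S
  proof -
    have "continuous_on S (\<lambda>t. f (g Orb t))" by (rule comp_cont[OF fC gO(2)[OF that]])
    then show ?thesis unfolding fr_def by (rule continuous_on_Re)
  qed
  note cont_g = cont_g1 cont_g2

  define K where "K Orb = (\<lambda>t. fr (g Orb t)) ` {0..T Orb}" for Orb
  have Kc: "compact (K Orb)" if "Orb \<in> Os" for Orb
    unfolding K_def by (rule compact_continuous_image[OF cont_g(2)[OF that] compact_Icc])
  have Kfr: "K Orb = fr ` Orb" if "Orb \<in> Os" for Orb
  proof -
    have "K Orb = fr ` (g Orb ` {0..T Orb})" unfolding K_def by (rule image_image[symmetric])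
    also have "\<dots> = fr ` Orb" by (simp only: rng[OF that])
    finally show ?thesis .
  qed
  have Kdisj: "K O1 \<inter> K O2 = {}" if o12: "O1 \<in> Os" "O2 \<in> Os" "O1 \<noteq> O2" for O1 O2
  proof (rule ccontr)
    assume "K O1 \<inter> K O2 \<noteq> {}"
    then obtain z where z: "z \<in> K O1" "z \<in> K O2" by blast
    then obtain x y where xy: "x \<in> O1" "y \<in> O2" "fr x = fr y"
      unfolding Kfr[OF o12(1)] Kfr[OF o12(2)] by auto
    then have "f x = f y" using feq by simp
    then show False using f(3) o12 xy by blast
  qed
  define Kall where "Kall = \<Union>(K ` Os)"
  have Kallc: "compact Kall" unfolding Kall_def using fin Kc by (intro compact_Union) auto
  define k where "k = card Os"
  define \<epsilon> :: real where "\<epsilon> = 1 / (2 * real k + 3)"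
  have epos: "\<epsilon> > 0" by (simp add: \<epsilon>_def)
  have ek: "real k * \<epsilon> < 1"
  proof -
    have "real k * \<epsilon> = real k / (2 * real k + 3)" by (simp add: \<epsilon>_def)
    also have "\<dots> < 1" by (simp add: divide_less_eq)
    finally show ?thesis .
  qed
  have ehalf: "\<epsilon> < 1/2" unfolding \<epsilon>_def by (simp add: field_simps)
  define h where "h Orb x = (if x \<in> K Orb then 1 else (0::real))" for Orb x
  have hcont: "continuous_on Kall (h Orb)" if o: "Orb \<in> Os" for Orb
  proof -
    define R where "R = \<Union>(K ` (Os - {Orb}))"
    have KR: "Kall = K Orb \<union> R" unfolding Kall_def R_def using o by blast
    have cR: "closed R" unfolding R_def using fin Kc by (intro compact_imp_closed compact_Union) auto
    have cK: "closed (K Orb)" using Kc[OF o] compact_imp_closed by blast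
    have dKR: "K Orb \<inter> R = {}" unfolding R_def using Kdisj o by blast
    have "continuous_on (K Orb \<union> R) (\<lambda>x. if x \<in> K Orb then 1 else (0::real))"
      by (rule continuous_on_cases[OF cK cR continuous_on_const continuous_on_const]) (use dKR in blast)
    then show ?thesis unfolding KR h_def .
  qed
  have "\<forall>Orb\<in>Os. \<exists>p. real_polynomial_function p \<and> (\<forall>x\<in>Kall. \<bar>h Orb x - p x\<bar> < \<epsilon>)"
  proof
    fix Orb assume o: "Orb \<in> Os"
    obtain p where "real_polynomial_function p" "\<And>x. x \<in> Kall \<Longrightarrow> \<bar>h Orb x - p x\<bar> < \<epsilon>"
      using Stone_Weierstrass_real_polynomial_function[OF Kallc hcont[OF o] epos] by blast
    then show "\<exists>p. real_polynomial_function p \<and> (\<forall>x\<in>Kall. \<bar>h Orb x - p x\<bar> < \<epsilon>)" by blast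
  qed
  from bchoice[OF this] obtain p where p: "\<forall>Orb\<in>Os. real_polynomial_function (p Orb) \<and> (\<forall>x\<in>Kall. \<bar>h Orb x - p Orb x\<bar> < \<epsilon>)"
    by blast
  have "\<forall>Orb\<in>Os. \<exists>cn. p Orb = (\<lambda>x. \<Sum>i\<le>snd cn. fst cn i * x ^ i)"
  proof
    fix Orb assume "Orb \<in> Os"
    then have "real_polynomial_function (p Orb)" using p by blast
    then obtain c n where "p Orb = (\<lambda>x. \<Sum>i\<le>n. c i * x ^ i)"
      unfolding real_polynomial_function_iff_sum by blast
    then show "\<exists>cn. p Orb = (\<lambda>x. \<Sum>i\<le>snd cn. fst cn i * x ^ i)" by (intro exI[of _ "(c, n)"]) simp
  qed
  from bchoice[OF this] obtain cn where cn: "\<forall>Orb\<in>Os. p Orb = (\<lambda>x. \<Sum>i\<le>snd (cn Orb). fst (cn Orb) i * x ^ i)"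
    by blast
  define U where "U Orb z = (\<Sum>i\<le>snd (cn Orb). complex_of_real (fst (cn Orb) i) * (\<phi> z * f z ^ i))" for Orb z
  have UA: "U Orb \<in> A" for Orb
    unfolding U_def[abs_def] by (rule sub_poly[OF A \<phi>A f(1)])
  have Ueq: "U Orb z = complex_of_real (\<phi>r z * p Orb (fr z))" if "Orb \<in> Os" for Orb z
    unfolding U_def cn[rule_format, OF that] \<phi>eq feq
    by (simp add: of_real_sum sum_distrib_left algebra_simps)

  define a where "a Orb = integral {0..T Orb} (\<lambda>t. \<phi>r (g Orb t))" for Orb
  define m where "m Orb Orb' = integral {0..T Orb} (\<lambda>t. \<phi>r (g Orb t) * p Orb' (fr (g Orb t)))" for Orb Orb'
  have pcont: "continuous_on S (p Orb')" if "Orb' \<in> Os" for Orb' S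
    unfolding cn[rule_format, OF that] by (intro continuous_intros)
  have cont_int: "continuous_on {0..T Orb} (\<lambda>t. \<phi>r (g Orb t) * p Orb' (fr (g Orb t)))"
    if "Orb \<in> Os" "Orb' \<in> Os" for Orb Orb'
  proof -
    have "continuous_on {0..T Orb} (p Orb' \<circ> (\<lambda>t. fr (g Orb t)))"
      by (rule continuous_on_compose[OF cont_g(2)[OF that(1)] pcont[OF that(2)]])
    then show ?thesis using cont_g(1)[OF that(1)] by (intro continuous_on_mult) (auto simp: o_def)
  qed
  have Uint: "integral {0..T Orb} (\<lambda>t. U Orb' (g Orb t)) = complex_of_real (m Orb Orb')"
    if "Orb \<in> Os" "Orb' \<in> Os" for Orb Orb'
    unfolding Ueq[OF that(2)] m_def
    by (rule int_of_real[OF integrable_continuous_interval[OF cont_int[OF that]]])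
  have apos: "a Orb > 0" if o: "Orb \<in> Os" for Orb
  proof -
    obtain x where x: "x \<in> Orb" "\<phi>r x > 0" using \<phi>pos[OF o] by blast
    then obtain s where s: "s \<in> {0..T Orb}" "x = g Orb s" using rng[OF o] by blast
    show ?thesis unfolding a_def
      by (rule int_pos[OF cont_g(1)[OF o] \<phi>nn gO(3)[OF o] s(1)]) (use x s in simp)
  qed
  have bound: "\<bar>m Orb Orb' - (if Orb' = Orb then 1 else 0) * a Orb\<bar> \<le> \<epsilon> * a Orb"
    if o: "Orb \<in> Os" "Orb' \<in> Os" for Orb Orb'
  proof -
    define hv :: real where "hv = (if Orb' = Orb then 1 else 0)"
    have hval: "h Orb' (fr (g Orb t)) = hv" if t: "t \<in> {0..T Orb}" for t
    proof -
      have "fr (g Orb t) \<in> K Orb" unfolding K_def using t by blast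
      then show ?thesis using Kdisj[OF o(2) o(1)] unfolding h_def hv_def by auto
    qed
    have inK: "fr (g Orb t) \<in> Kall" if t: "t \<in> {0..T Orb}" for t
      unfolding Kall_def K_def using t o(1) by blast
    have i1: "(\<lambda>t. \<phi>r (g Orb t) * p Orb' (fr (g Orb t))) integrable_on {0..T Orb}"
      by (rule integrable_continuous_interval[OF cont_int[OF o]])
    have i2: "(\<lambda>t. \<phi>r (g Orb t)) integrable_on {0..T Orb}"
      by (rule integrable_continuous_interval[OF cont_g(1)[OF o(1)]])
    have i3: "(\<lambda>t. hv * \<phi>r (g Orb t)) integrable_on {0..T Orb}"
      using integrable_on_cmult_left[OF i2, of hv] by (simp add: algebra_simps)
    have "m Orb Orb' - hv * a Orb = integral {0..T Orb} (\<lambda>t. \<phi>r (g Orb t) * p Orb' (fr (g Orb t)) - hv * \<phi>r (g Orb t))"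
      unfolding m_def a_def using integral_diff[OF i1 i3] by (simp add: integral_mult_right)
    also have "\<bar>\<dots>\<bar> \<le> integral {0..T Orb} (\<lambda>t. \<epsilon> * \<phi>r (g Orb t))"
    proof (rule integral_norm_bound_integral[where f="\<lambda>t. \<phi>r (g Orb t) * p Orb' (fr (g Orb t)) - hv * \<phi>r (g Orb t)", simplified])
      show "(\<lambda>t. \<phi>r (g Orb t) * p Orb' (fr (g Orb t)) - hv * \<phi>r (g Orb t)) integrable_on {0..T Orb}"
        by (rule integrable_diff[OF i1 i3])
      show "(\<lambda>t. \<epsilon> * \<phi>r (g Orb t)) integrable_on {0..T Orb}"
        using integrable_on_cmult_left[OF i2, of \<epsilon>] by (simp add: algebra_simps)
      fix t assume t: "t \<in> {0..T Orb}"
      have "\<bar>h Orb' (fr (g Orb t)) - p Orb' (fr (g Orb t))\<bar> < \<epsilon>" using p o(2) inK[OF t] by blast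
      then have pe: "\<bar>p Orb' (fr (g Orb t)) - hv\<bar> \<le> \<epsilon>" using hval[OF t] by simp
      have "\<bar>\<phi>r (g Orb t) * p Orb' (fr (g Orb t)) - hv * \<phi>r (g Orb t)\<bar> = \<phi>r (g Orb t) * \<bar>p Orb' (fr (g Orb t)) - hv\<bar>"
      proof -
        have "\<phi>r (g Orb t) * p Orb' (fr (g Orb t)) - hv * \<phi>r (g Orb t) = \<phi>r (g Orb t) * (p Orb' (fr (g Orb t)) - hv)"
          by (simp add: algebra_simps)
        then show ?thesis using \<phi>nn[of "g Orb t"] by (simp add: abs_mult)
      qed
      also have "\<dots> \<le> \<phi>r (g Orb t) * \<epsilon>" using pe \<phi>nn[of "g Orb t"] by (intro mult_left_mono) auto
      finally show "\<bar>\<phi>r (g Orb t) * p Orb' (fr (g Orb t)) - hv * \<phi>r (g Orb t)\<bar> \<le> \<epsilon> * \<phi>r (g Orb t)"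
        by (simp add: algebra_simps)
    qed
    also have "\<dots> = \<epsilon> * a Orb" unfolding a_def by (simp add: integral_mult_right)
    finally show ?thesis unfolding hv_def .
  qed
  have diag: "\<bar>m Orb Orb\<bar> \<ge> (1 - \<epsilon>) * a Orb" if o: "Orb \<in> Os" for Orb
  proof -
    have "\<bar>m Orb Orb - a Orb\<bar> \<le> \<epsilon> * a Orb" using bound[OF o o] by simp
    then show ?thesis by (simp add: algebra_simps abs_le_iff) linarith
  qed
  have off: "\<bar>m Orb Orb'\<bar> \<le> \<epsilon> * a Orb" if o: "Orb \<in> Os" "Orb' \<in> Os" "Orb \<noteq> Orb'" for Orb Orb'
    using bound[OF o(1) o(2)] o(3) by simp
  have inj: "inj_on U Os"
  proof (rule inj_onI, rule ccontr)
    fix O1 O2 assume o: "O1 \<in> Os" "O2 \<in> Os" "U O1 = U O2" "O1 \<noteq> O2"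
    have "complex_of_real (m O1 O1) = complex_of_real (m O1 O2)"
      using Uint[OF o(1) o(1)] Uint[OF o(1) o(2)] o(3) by simp
    then have meq: "m O1 O1 = m O1 O2" by simp
    have "\<epsilon> * a O1 < (1 - \<epsilon>) * a O1"
      using apos[OF o(1)] ehalf by (intro mult_strict_right_mono) auto
    then show False using diag[OF o(1)] off[OF o(1) o(2) o(4)] meq by simp
  qed
  define S where "S = U ` Os"
  have Sfin: "finite S" unfolding S_def using fin by simp
  have SA: "S \<subseteq> A" unfolding S_def using UA by blast
  have Scard: "card S = card Os" unfolding S_def by (rule card_image[OF inj])
  have indep: "indep_mod (Dop P Q ` A) S"
    unfolding indep_mod_def
  proof (intro allI impI ballI)
    fix c u assume mem: "(\<lambda>z. \<Sum>u\<in>S. c u * u z) \<in> Dop P Q ` A" and u: "u \<in> S"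
    obtain V where V: "V \<in> A" "(\<lambda>z. \<Sum>u\<in>S. c u * u z) = Dop P Q V" using mem by blast
    have SC: "\<forall>u\<in>S. Cinf u" using SA sub_Cinf[OF A] by blast
    have eqs: "\<forall>Orb\<in>Os. (\<Sum>O'\<in>Os. c (U O') * complex_of_real (m Orb O')) = 0"
    proof
      fix Orb assume o: "Orb \<in> Os"
      have dv: "Dop P Q V (g Orb t) = (\<Sum>u\<in>S. c u * u (g Orb t))" for t
        using fun_cong[OF V(2), of "g Orb t"] by simp
      have "0 = integral {0..T Orb} (\<lambda>t. Dop P Q V (g Orb t))"
        using int_Dop_zero[OF gO(2)[OF o] gO(4)[OF o] gO(3)[OF o] sub_Cinf[OF A V(1)]] by simp
      also have "\<dots> = integral {0..T Orb} (\<lambda>t. \<Sum>u\<in>S. c u * u (g Orb t))" by (simp add: dv)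
      also have "\<dots> = (\<Sum>u\<in>S. c u * integral {0..T Orb} (\<lambda>t. u (g Orb t)))"
        by (rule int_lin[OF Sfin SC gO(2)[OF o]])
      also have "\<dots> = (\<Sum>O'\<in>Os. c (U O') * integral {0..T Orb} (\<lambda>t. U O' (g Orb t)))"
        unfolding S_def by (simp add: sum.reindex[OF inj])
      also have "\<dots> = (\<Sum>O'\<in>Os. c (U O') * complex_of_real (m Orb O'))"
        by (rule sum.cong) (simp_all add: Uint[OF o])
      finally show "(\<Sum>O'\<in>Os. c (U O') * complex_of_real (m Orb O')) = 0" by simp
    qed
    have "\<forall>Orb\<in>Os. c (U Orb) = 0"
      by (rule diag_dom[OF fin eqs, of a \<epsilon>]) (use apos diag off ek epos in \<open>auto simp: k_def\<close>)
    then show "c u = 0" using u unfolding S_def by blast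
  qed
  have "S \<in> {S. finite S \<and> S \<subseteq> A \<and> indep_mod (Dop P Q ` A) S}" using Sfin SA indep by blast
  then have "enat (card S) \<le> quotient_dim A (Dop P Q ` A)"
    unfolding quotient_dim_def by (rule SUP_upper)
  then show ?thesis using Scard by simp
qed

theorem mainTheorem2:
  fixes P Q :: "real \<times> real \<Rightarrow> real" and A :: "(real \<times> real \<Rightarrow> complex) set"
  assumes "Cinf P" and "Cinf Q"
    and "subalgebra A" and "self_adjoint A" and "separates_compact_submanifolds A"
    and "Dop P Q ` A \<subseteq> A"
  shows "ecard (closed_orbits P Q) \<le> quotient_dim A (Dop P Q ` A)"
proof (cases "finite (closed_orbits P Q)")
  case True
  then show ?thesis unfolding ecard_def
    using lower_bound[OF assms(1,2,3,5) True subset_refl] by simp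
next
  case False
  have all: "enat n \<le> quotient_dim A (Dop P Q ` A)" for n
  proof -
    obtain B where "finite B" "card B = n" "B \<subseteq> closed_orbits P Q"
      using infinite_arbitrarily_large[OF False] by blast
    then show ?thesis using lower_bound[OF assms(1,2,3,5)] by blast
  qed
  have "quotient_dim A (Dop P Q ` A) = \<infinity>"
  proof (cases "quotient_dim A (Dop P Q ` A)")
    case (enat k)
    then show ?thesis using all[of "Suc k"] by simp
  qed simp
  then show ?thesis by simp
qed


end
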